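(* Let $t \in \mathbb{N}_0$ and $b \in \mathbb{N}$ be such that $\Phi_b(x)$ divides \begin{align*} R_t(x) = {}& x^{8t+15} + x^{8t+14} + x^{8t+11} - x^{8t+10} - x^{8t+8} + 2x^{6t+9} - x^{4t+15} - x^{4t+11} - x^{4t+9} + 2x^{4t+8} \\ & - 2x^{4t+7} + x^{4t+6} + x^{4t+4} + x^{4t} - 2x^{2t+6} + x^7 + x^5 - x^4 - x - 1. \end{align*} Then $4 \nmid b$.
   Context: $\Phi_b(x) = \prod_\zeta (x-\zeta)$, where $\zeta$ ranges over the primitive $b$-th roots of unity, is the $b$-th cyclotomic polynomial. *)

theory Defs
  imports "HOL-Computational_Algebra.Polynomial" Complex_Main
begin

definition primitive_roots_of_unity :: "nat \<Rightarrow> complex set" where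
  "primitive_roots_of_unity b =
     {z. z ^ b = 1 \<and> (\<forall>k. 0 < k \<and> k < b \<longrightarrow> z ^ k \<noteq> 1)}"

definition cyclotomic :: "nat \<Rightarrow> complex poly" where
  "cyclotomic b = (\<Prod>\<zeta>\<in>primitive_roots_of_unity b. [:-\<zeta>, 1:])"

definition R_poly :: "nat \<Rightarrow> complex poly" where
  "R_poly t =
     monom 1 (8*t+15) + monom 1 (8*t+14) + monom 1 (8*t+11) - monom 1 (8*t+10)
   - monom 1 (8*t+8) + monom 2 (6*t+9) - monom 1 (4*t+15) - monom 1 (4*t+11)
   - monom 1 (4*t+9) + monom 2 (4*t+8) - monom 2 (4*t+7) + monom 1 (4*t+6)
   + monom 1 (4*t+4) + monom 1 (4*t) - monom 2 (2*t+6) + monom 1 7 + monom 1 5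
   - monom 1 4 - monom 1 1 - 1"

end

theory Submission
  imports Defs "HOL-Computational_Algebra.Computational_Algebra" "HOL-Library.Z2"
begin


definition gF :: "'a::comm_ring_1 \<Rightarrow> 'a" where
  "gF x = x^12 + x^10 + x^9 + x^8 + x^6 + x^4 + x^3 + x^2 + 1"
definition ResF :: "'a::comm_ring_1 \<Rightarrow> 'a" where
  "ResF x = x^5 * (x+1)^6 * gF x"
definition Rf :: "'a::comm_ring_1 \<Rightarrow> 'a \<Rightarrow> 'a \<Rightarrow> 'a" where
  "Rf x w v = w^2*x^15 + w^2*x^14 + w^2*x^11 - w^2*x^10 - w^2*x^8 + 2*w*v*x^9 - w*x^15 - w*x^11
    - w*x^9 + 2*w*x^8 - 2*w*x^7 + w*x^6 + w*x^4 + w - 2*v*x^6 + x^7 + x^5 - x^4 - x - 1"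
definition Fw :: "'a::comm_ring_1 \<Rightarrow> 'a \<Rightarrow> 'a" where
  "Fw x w = w^2*(x^15+x^14+x^11-x^10-x^8) - w*(x^15+x^11+x^9-x^6-x^4-1) + x^7+x^5-x^4-x-1"
definition a2 :: "'a::comm_ring_1 \<Rightarrow> 'a" where "a2 x = x^4*(x^3+x+1)"
definition a1 :: "'a::comm_ring_1 \<Rightarrow> 'a" where "a1 x = x^3+x^2+1"
definition a0 :: "'a::comm_ring_1 \<Rightarrow> 'a" where "a0 x = x^2+1"
definition b2 :: "'a::comm_ring_1 \<Rightarrow> 'a" where "b2 x = x^5*(x^2+1)"
definition b1 :: "'a::comm_ring_1 \<Rightarrow> 'a" where "b1 x = x^4*(x^3+x+1)"
definition b0 :: "'a::comm_ring_1 \<Rightarrow> 'a" where "b0 x = x^3+x^2+1"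
definition Ae :: "'a::comm_ring_1 \<Rightarrow> 'a \<Rightarrow> 'a" where "Ae x y = a2 x * y^2 + a1 x * y + a0 x"
definition Be :: "'a::comm_ring_1 \<Rightarrow> 'a \<Rightarrow> 'a" where "Be x y = b2 x * y^2 + b1 x * y + b0 x"
definition Ue :: "'a::comm_ring_1 \<Rightarrow> 'a \<Rightarrow> 'a" where
  "Ue x y = (a2 x * b1 x - a1 x * b2 x) * b2 x * y + (a2 x * b1 x - a1 x * b2 x) * b1 x
     - (a2 x * b0 x - a0 x * b2 x) * b2 x"
definition Ve :: "'a::comm_ring_1 \<Rightarrow> 'a \<Rightarrow> 'a" where
  "Ve x y = - (a2 x * b1 x - a1 x * b2 x) * a2 x * y - (a2 x * b1 x - a1 x * b2 x) * a1 x
     + (a2 x * b0 x - a0 x * b2 x) * a2 x"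

lemma res_generic:
  fixes A2 A1 A0 B2 B1 B0 y :: "'a::idom"
  shows "((A2*B1 - A1*B2)*B2*y + (A2*B1 - A1*B2)*B1 - (A2*B0 - A0*B2)*B2) * (A2*y^2 + A1*y + A0)
    + (- (A2*B1 - A1*B2)*A2*y - (A2*B1 - A1*B2)*A1 + (A2*B0 - A0*B2)*A2) * (B2*y^2 + B1*y + B0)
    = (A2*B0 - A0*B2)^2 - (A2*B1 - A1*B2)*(A1*B0 - A0*B1)"
  by algebra

lemma res_x:
  fixes x :: "'a::idom"
  shows "(a2 x*b0 x - a0 x*b2 x)^2 - (a2 x*b1 x - a1 x*b2 x)*(a1 x*b0 x - a0 x*b1 x) + 2*(3*x^6 + 6*x^7 + 12*x^8 + 17*x^9 + 20*x^10 + 27*x^11 + 24*x^12 + 20*x^13 + 22*x^14 + 20*x^15 + 24*x^16 + 27*x^17 + 20*x^18 + 17*x^19 + 12*x^20 + 6*x^21 + 3*x^22) = ResF x"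
  unfolding a2_def a1_def a0_def b2_def b1_def b0_def ResF_def gF_def by algebra

lemma UV_id:
  fixes x y :: "'a::idom"
  shows "Ue x y * Ae x y + Ve x y * Be x y + 2*(3*x^6 + 6*x^7 + 12*x^8 + 17*x^9 + 20*x^10 + 27*x^11 + 24*x^12 + 20*x^13 + 22*x^14 + 20*x^15 + 24*x^16 + 27*x^17 + 20*x^18 + 17*x^19 + 12*x^20 + 6*x^21 + 3*x^22) = ResF x"
  unfolding Ue_def Ve_def Ae_def Be_def
  using res_generic[of "a2 x" "b1 x" "a1 x" "b2 x" y "b0 x" "a0 x"] res_x[of x] by simp

lemma R_AB:
  fixes x y :: "'a::idom"
  shows "Rf x (y^2) y + 2*(1 + y + x + x^2 + 2*x^2*y + x^2*y^2 + x^3 + x^3*y + x^3*y^2 + 2*x^4 + x^4*y + x^4*y^2 + x^4*y^3 + 2*x^5*y + 2*x^5*y^2 + x^5*y^3 + x^6 + 2*x^6*y + 2*x^6*y^2 + x^6*y^3 + x^7*y + 3*x^7*y^2 + 3*x^7*y^3 + 3*x^8*y + x^8*y^2 + x^8*y^3 + x^8*y^4 + x^9*y + 3*x^9*y^2 + x^9*y^4 + x^10*y + 2*x^10*y^2 + 2*x^10*y^3 + x^10*y^4 + x^11*y + 2*x^11*y^2 + x^11*y^3 + x^11*y^4 + x^12*y^2 + x^12*y^3 + x^12*y^4 + x^13*y^2 + 2*x^13*y^3 + x^13*y^4 + x^15*y^2 + x^15*y^3) = Ae x y ^ 2 + x * Be x y ^ 2"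
  unfolding Rf_def Ae_def Be_def a2_def a1_def a0_def b2_def b1_def b0_def by algebra

lemma R_Fw:
  fixes x w v :: "'a::comm_ring_1"
  shows "Rf x w v = Fw x w + 2*(w*v*x^9 + w*x^8 - w*x^7 - v*x^6)"
  unfolding Rf_def Fw_def by (simp add: algebra_simps)

lemma Fw_diff:
  fixes x w :: "'a::comm_ring_1"
  shows "Fw x w - Fw x 1 = (w - 1) * ((w+1)*(x^15+x^14+x^11-x^10-x^8) - (x^15+x^11+x^9-x^6-x^4-1))"
  unfolding Fw_def by (simp add: algebra_simps power2_eq_square)

lemma Fw1:
  fixes x :: "'a::idom"
  shows "Fw x 1 + 2*(1 + 4*x + 5*x^2 + 5*x^3 + 6*x^4 + 7*x^5 + 7*x^6 + 5*x^7 + 3*x^8 + x^9 + x^10 + 2*x^11 + 3*x^12 + 2*x^13) = (x+1)^4 * (1 + x^2 + x^3 + x^4 + x^5 + x^10) + (x+1)^3"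
  unfolding Fw_def power_one mult_1 by algebra

lemma X4:
  fixes x :: "'a::idom"
  shows "x^4 - 1 + 2*(2*x^3 + 3*x^2 + 2*x + 1) = (x+1)^4"
  by algebra

lemma g65:
  fixes x :: "'a::idom"
  shows "x^65 + 1 + 2*(x^2 + x^3 + x^4 + x^5 + 2*x^6 + x^7 + 2*x^8 + 2*x^9 + 3*x^10 + 2*x^11 + 3*x^12 + 2*x^13 + 2*x^14 + 2*x^15 + 3*x^16 + 2*x^17 + 2*x^18 + 3*x^19 + 2*x^20 + 2*x^21 + 2*x^22 + 2*x^23 + x^24 + 3*x^25 + x^26 + 2*x^27 + 2*x^28 + 2*x^29 + x^30 + 2*x^31 + x^32 + x^33 + 2*x^34 + x^35 + 2*x^36 + 2*x^37 + 2*x^38 + x^39 + 3*x^40 + x^41 + 2*x^42 + 2*x^43 + 2*x^44 + 2*x^45 + 3*x^46 + 2*x^47 + 2*x^48 + 3*x^49 + 2*x^50 + 2*x^51 + 2*x^52 + 3*x^53 + 2*x^54 + 3*x^55 + 2*x^56 + 2*x^57 + x^58 + 2*x^59 + x^60 + x^61 + x^62 + x^63) = gF x * (1 + x^2 + x^3 + x^6 + x^7 + x^8 + x^10 + x^13 + x^16 + x^17 + x^19 + x^21 + x^25 + x^28 + x^32 + x^34 + x^36 + x^37 + x^40 + x^43 + x^45 + x^46 + x^47 + x^50 + x^51 + x^53)"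
  unfolding gF_def by algebra

lemma gcop1:
  fixes x :: "'a::idom"
  shows "(1) * gF x + (x^2 + x^3 + x^4 + x^5 + x^7 + x^9) * (x^3+1) = 1 + 2*(x^2 + x^3 + x^4 + x^5 + x^6 + x^7 + x^8 + x^9 + x^10 + x^12)"
  unfolding gF_def by algebra

lemma gcop2:
  fixes x :: "'a::idom"
  shows "(1 + x + x^2 + x^4 + x^7 + x^11 + x^13 + x^15 + x^16 + x^17 + x^19 + x^22 + x^23 + x^26 + x^27 + x^28 + x^29 + x^30 + x^31 + x^32 + x^33) * gF x + (x + x^6 + x^8 + x^9) * gF (x^3) = 1 + 2*(x + x^2 + x^3 + 2*x^4 + x^5 + 2*x^6 + 2*x^7 + 2*x^8 + 2*x^9 + 3*x^10 + 2*x^11 + 2*x^12 + 3*x^13 + 2*x^14 + 3*x^15 + 2*x^16 + 3*x^17 + 2*x^18 + 4*x^19 + 2*x^20 + 3*x^21 + 2*x^22 + 3*x^23 + 2*x^24 + 4*x^25 + 3*x^26 + 3*x^27 + 3*x^28 + 3*x^29 + 3*x^30 + 4*x^31 + 4*x^32 + 4*x^33 + 3*x^34 + 4*x^35 + 4*x^36 + 3*x^37 + 3*x^38 + 3*x^39 + 2*x^40 + 2*x^41 + 2*x^42 + x^43 + x^44 + x^45)"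
  unfolding gF_def by algebra


definition XX :: "bit poly" where "XX = [:0,1:]"

lemma XX_nz [simp]: "XX \<noteq> 0" by (simp add: XX_def)
lemma deg_XX [simp]: "degree XX = 1" by (simp add: XX_def)

lemma bp_two: "(2::bit poly) = 0"
  by (metis of_nat_numeral of_nat_poly bit_2_eq_0 pCons_0_0)

lemma bp_add_self: "(a::bit poly) + a = 0"
proof -
  have "a + a = 2 * a" by (rule mult_2[symmetric])
  then show ?thesis by (simp add: bp_two)
qed

lemma bp_minus: "- (a::bit poly) = a"
  by (rule minus_unique) (rule bp_add_self)

lemma bp_eq: "(b::bit poly) + d = 0 \<Longrightarrow> b = d"
proof -
  assume h: "b + d = 0"
  have "b = b + (d + d)" by (simp add: bp_add_self)
  also have "\<dots> = (b + d) + d" by (simp add: add.assoc)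
  also have "\<dots> = d" using h by simp
  finally show ?thesis .
qed

lemma bp_diff: "(a::bit poly) - b = a + b"
  by (metis bp_minus diff_conv_add_uminus)

lemma bp_kill2: "(a::bit poly) + 2 * c = a"
  by (simp add: bp_two)

lemma bp_sq_add: "((a::bit poly) + b)^2 = a^2 + b^2"
proof -
  have "(a + b)^2 = a^2 + b^2 + 2*(a*b)" by (simp add: power2_eq_square algebra_simps)
  then show ?thesis by (simp add: bp_two)
qed

lemma bit_sq: "(c::bit) * c = c"
  by (cases c) auto

lemma bp_const_sq: "[:c:]^2 = [:c::bit:]"
  by (simp add: power2_eq_square bit_sq)

lemma pCons_as: "pCons c f = [:c:] + XX * (f::bit poly)"
  by (simp add: XX_def)

lemma decomp: "\<exists>a b. (f::bit poly) = a^2 + XX * b^2"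
proof (induction f rule: pCons_induct)
  case 0
  then show ?case by (intro exI[of _ 0]) simp
next
  case (pCons c f)
  then obtain a b where f: "f = a^2 + XX * b^2" by blast
  have "([:c:] + XX * b)^2 + XX * a^2 = [:c:]^2 + (XX*b)^2 + XX * a^2"
    by (simp only: bp_sq_add)
  also have "\<dots> = [:c:] + XX * f"
    by (simp only: bp_const_sq f) (simp add: power2_eq_square algebra_simps)
  finally show ?case by (metis pCons_as)
qed

lemma deg_sq: "degree ((a::bit poly)^2) = 2 * degree a"
  by (cases "a = 0") (simp_all add: degree_power_eq)

lemma uniq:
  assumes "(a::bit poly)^2 + XX*b^2 = c^2 + XX*d^2"
  shows "a = c \<and> b = d"
proof -
  have "(a + c)^2 = a^2 + c^2" by (rule bp_sq_add)
  also have "\<dots> = a^2 - c^2" by (simp add: bp_diff)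
  also have "\<dots> = (a^2 + XX*b^2) - (c^2 + XX*b^2)" by simp
  also have "\<dots> = (c^2 + XX*d^2) - (c^2 + XX*b^2)" using assms by simp
  also have "\<dots> = XX*d^2 - XX*b^2" by simp
  also have "\<dots> = XX*d^2 + XX*b^2" by (simp add: bp_diff)
  also have "\<dots> = XX*(b+d)^2" by (simp add: bp_sq_add algebra_simps)
  finally have eq: "(a + c)^2 = XX*(b+d)^2" .
  have bd: "b + d = 0"
  proof (rule ccontr)
    assume nz: "b + d \<noteq> 0"
    then have "XX*(b+d)^2 \<noteq> 0" by simp
    then have "a + c \<noteq> 0" using eq by auto
    have "degree (XX*(b+d)^2) = 1 + 2 * degree (b+d)"
      using nz by (simp add: degree_mult_eq deg_sq)
    moreover have "degree ((a+c)^2) = 2 * degree (a+c)" by (rule deg_sq)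
    ultimately have "2 * degree (a+c) = 1 + 2 * degree (b+d)" using eq by simp
    then show False by presburger
  qed
  then have "b = d" by (rule bp_eq)
  moreover have "a + c = 0" using eq bd by simp
  then have "a = c" by (rule bp_eq)
  ultimately show ?thesis by simp
qed

lemma sq_dvd_decomp:
  assumes "(e::bit poly)^2 * Q = A^2 + XX*B^2"
  shows "e dvd A \<and> e dvd B"
proof -
  obtain q1 q2 where q: "Q = q1^2 + XX*q2^2" using decomp by blast
  have "(e*q1)^2 + XX*(e*q2)^2 = A^2 + XX*B^2"
    using assms unfolding q by (simp add: algebra_simps power_mult_distrib)
  then have "A = e*q1 \<and> B = e*q2" using uniq by metis
  then show ?thesis by auto
qed

definition bez :: "'a::comm_ring_1 \<Rightarrow> 'a \<Rightarrow> bool" where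
  "bez a b \<longleftrightarrow> (\<exists>u v. u*a + v*b = 1)"

lemma bezI: "u*a + v*b = 1 \<Longrightarrow> bez a b"
  unfolding bez_def by blast

lemma bez_mult: "bez a b \<Longrightarrow> bez a c \<Longrightarrow> bez a (b*c)"
proof -
  assume "bez a b" "bez a c"
  then obtain u1 v1 u2 v2 where h: "u1*a + v1*b = 1" "u2*a + v2*c = 1" unfolding bez_def by blast
  have "(u1*a + v1*b) * (u2*a + v2*c) = 1" using h by simp
  then have "(u1*u2*a + u1*v2*c + v1*b*u2)*a + (v1*v2)*(b*c) = 1" by (simp add: algebra_simps)
  then show ?thesis by (rule bezI)
qed

lemma bez_one: "bez a 1"
  by (rule bezI[of 0 _ 1]) simp

lemma bez_pow: "bez a b \<Longrightarrow> bez a (b^n)"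
  by (induction n) (simp_all add: bez_one bez_mult)

lemma bez_dvd_mult: "bez a b \<Longrightarrow> a dvd b * c \<Longrightarrow> a dvd c"
proof -
  assume "bez a b" "a dvd b * c"
  then obtain u v k where h: "u*a + v*b = 1" "b*c = a*k" unfolding bez_def by (auto elim!: dvdE)
  have "c = (u*a + v*b)*c" using h by simp
  also have "\<dots> = u*a*c + v*(b*c)" by (simp add: algebra_simps)
  also have "\<dots> = a*(u*c + v*k)" unfolding h(2) by (simp add: algebra_simps)
  finally show ?thesis by (rule dvdI)
qed

lemma bez_sym: "bez a b \<Longrightarrow> bez b a"
proof -
  assume "bez a b"
  then obtain u v where "u*a + v*b = 1" unfolding bez_def by blast
  then have "v*b + u*a = 1" by (simp add: add.commute)
  then show ?thesis by (rule bezI)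
qed

lemma bez_dvd_right: "bez a b \<Longrightarrow> d dvd b \<Longrightarrow> bez a d"
proof -
  assume "bez a b" "d dvd b"
  then obtain u v k where h: "u*a + v*b = 1" "b = d*k" unfolding bez_def by (auto elim!: dvdE)
  then have "u*a + (v*k)*d = 1" by (simp add: algebra_simps)
  then show ?thesis by (rule bezI)
qed

lemma bez_cong: "(m::'a::comm_ring_1) dvd a - b \<Longrightarrow> bez m b \<Longrightarrow> bez m a"
proof -
  assume "m dvd a - b" "bez m b"
  then obtain u v k where h: "u*m + v*b = 1" "a - b = m*k" unfolding bez_def by (auto elim!: dvdE)
  have "(u - v*k)*m + v*a = u*m + v*(a - m*k)" by (simp add: algebra_simps)
  also have "a - m*k = b" using h(2) by (simp add: algebra_simps)
  finally have "(u - v*k)*m + v*a = 1" using h(1) by simp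
  then show ?thesis by (rule bezI)
qed

lemma bez_unit: "bez a b \<Longrightarrow> a dvd b \<Longrightarrow> a dvd 1"
  using bez_dvd_mult[of a b 1] by simp

lemma AB_dvd:
  fixes e Q :: "bit poly"
  assumes "odd j" "bez e XX"
    and "e^2 * Q = Rf (XX^j) ((XX^j)^(4*t)) ((XX^j)^(2*t))"
  shows "e dvd Ae (XX^j) ((XX^j)^(2*t)) \<and> e dvd Be (XX^j) ((XX^j)^(2*t))"
proof -
  define y where "y = (XX^j)^(2*t)"
  have y2: "y^2 = (XX^j)^(4*t)"
  proof -
    have "y^2 = (XX^j)^(2*t*2)" unfolding y_def by (rule power_mult[symmetric])
    also have "2*t*2 = 4*t" by simp
    finally show ?thesis .
  qed
  obtain k where j: "j = 2*k+1" using assms(1) oddE by blast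
  have "e^2 * Q = Rf (XX^j) (y^2) y" using assms(3) by (subst y2) (simp add: y_def)
  also have "\<dots> = Ae (XX^j) y ^ 2 + XX^j * Be (XX^j) y ^ 2"
    using R_AB[of "XX^j" y] unfolding bp_kill2 .
  also have "XX^j * Be (XX^j) y ^ 2 = XX * (XX^k * Be (XX^j) y)^2"
  proof -
    have "(XX^k * Be (XX^j) y)^2 = (XX^k)^2 * Be (XX^j) y ^ 2" by (rule power_mult_distrib)
    also have "(XX^k)^2 = XX^(2*k)" by (simp add: power_mult[symmetric] mult.commute)
    finally have "XX * (XX^k * Be (XX^j) y)^2 = (XX * XX^(2*k)) * Be (XX^j) y ^ 2"
      by (simp only: mult.assoc)
    also have "(XX * XX^(2*k)) * Be (XX^j) y ^ 2 = XX^j * Be (XX^j) y ^ 2" unfolding j by simp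
    finally show ?thesis by (rule sym)
  qed
  finally have "e dvd Ae (XX^j) y \<and> e dvd XX^k * Be (XX^j) y"
    using sq_dvd_decomp by blast
  moreover have "bez e (XX^k)" using assms(2) by (rule bez_pow)
  ultimately show ?thesis unfolding y_def using bez_dvd_mult by blast
qed

lemma Res_dvd:
  fixes e Q :: "bit poly"
  assumes "odd j" "bez e XX"
    and "e^2 * Q = Rf (XX^j) ((XX^j)^(4*t)) ((XX^j)^(2*t))"
  shows "e dvd ResF (XX^j)"
proof -
  define y where "y = (XX^j)^(2*t)"
  have "e dvd Ae (XX^j) y" "e dvd Be (XX^j) y" using AB_dvd[OF assms] unfolding y_def by auto
  then have "e dvd Ue (XX^j) y * Ae (XX^j) y + Ve (XX^j) y * Be (XX^j) y" by simp
  moreover have "Ue (XX^j) y * Ae (XX^j) y + Ve (XX^j) y * Be (XX^j) y = ResF (XX^j)"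
    using UV_id[of "XX^j" y] unfolding bp_kill2 .
  ultimately show ?thesis by simp
qed

lemma cm_mult: "(m::'a::comm_ring_1) dvd a - b \<Longrightarrow> m dvd c - d \<Longrightarrow> m dvd a*c - b*d"
proof -
  assume h: "m dvd a - b" "m dvd c - d"
  have "a*c - b*d = a*(c - d) + (a - b)*d" by (simp add: algebra_simps)
  then show ?thesis using h by simp
qed

lemma cm_add: "(m::'a::comm_ring_1) dvd a - b \<Longrightarrow> m dvd c - d \<Longrightarrow> m dvd (a+c) - (b+d)"
proof -
  assume h: "m dvd a - b" "m dvd c - d"
  have "(a+c) - (b+d) = (a - b) + (c - d)" by (simp add: algebra_simps)
  then show ?thesis using h by (metis dvd_add)
qed

lemma cm_pow: "(m::'a::comm_ring_1) dvd a - b \<Longrightarrow> m dvd a^n - b^n"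
  by (induction n) (auto intro: cm_mult)

lemma cm_refl: "(m::'a::comm_ring_1) dvd a - a" by simp

lemma gF_cong: "(m::'a::comm_ring_1) dvd a - b \<Longrightarrow> m dvd gF a - gF b"
  unfolding gF_def by (intro cm_add cm_pow cm_refl) 

abbreviation GG :: "bit poly" where "GG \<equiv> gF XX"

lemma gF_split: "gF (x::'a::idom) = x * (x^11 + x^9 + x^8 + x^7 + x^5 + x^3 + x^2 + x) + 1"
  unfolding gF_def by algebra

lemma G_X: "bez GG XX"
proof -
  define k where "k = XX^11 + XX^9 + XX^8 + XX^7 + XX^5 + XX^3 + XX^2 + XX"
  have "1 * GG + k * XX = (XX * k + XX * k) + 1" unfolding gF_split[of XX] k_def by (simp add: algebra_simps)
  then have "1 * GG + k * XX = 1" by (simp add: bp_add_self)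
  then show ?thesis by (rule bezI)
qed

lemma G_X31: "bez GG (XX^3 + 1)"
  using gcop1[of XX] unfolding bp_kill2 by (rule bezI)

lemma G_G3: "bez GG (gF (XX^3))"
  using gcop2[of XX] unfolding bp_kill2 by (rule bezI)

lemma G_65: "GG dvd XX^65 - 1"
proof -
  have "XX^65 + 1 = GG * (1 + XX^2 + XX^3 + XX^6 + XX^7 + XX^8 + XX^10 + XX^13 + XX^16 + XX^17 + XX^19 + XX^21 + XX^25 + XX^28 + XX^32 + XX^34 + XX^36 + XX^37 + XX^40 + XX^43 + XX^45 + XX^46 + XX^47 + XX^50 + XX^51 + XX^53)"
    using g65[of XX] unfolding bp_kill2 .
  then show ?thesis unfolding bp_diff by (rule dvdI)
qed

lemma G_j: "j mod 65 = 3 \<Longrightarrow> GG dvd XX^j - XX^3"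
proof -
  assume h: "j mod 65 = 3"
  then have j: "j = 65 * (j div 65) + 3" by (metis mult_div_mod_eq)
  have "GG dvd (XX^65)^(j div 65) - 1^(j div 65)" by (rule cm_pow) (simp add: G_65)
  then have "GG dvd ((XX^65)^(j div 65) - 1) * XX^3" by simp
  moreover have "XX^j = (XX^65)^(j div 65) * XX^3" by (subst j) (simp only: power_add power_mult)
  then have "((XX^65)^(j div 65) - 1) * XX^3 = XX^j - XX^3" by (simp add: left_diff_distrib)
  ultimately show ?thesis by simp
qed

lemma G_Res: "j mod 65 = 3 \<Longrightarrow> bez GG (ResF (XX^j))"
proof -
  assume h: "j mod 65 = 3"
  have c1: "bez GG ((XX^j)^5)" using G_X by (intro bez_pow)
  have "bez GG (XX^j + 1)"
    by (rule bez_cong[OF _ G_X31]) (use G_j[OF h] in \<open>simp add: algebra_simps\<close>)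
  then have c2: "bez GG ((XX^j + 1)^6)" by (rule bez_pow)
  have c3: "bez GG (gF (XX^j))"
    by (rule bez_cong[OF _ G_G3]) (rule gF_cong[OF G_j[OF h]])
  show ?thesis unfolding ResF_def using c1 c2 c3 by (intro bez_mult)
qed

lemma X1_eq: "XX + 1 = [:1,1:]" by (simp add: XX_def one_pCons)

lemma X1_eq': "[:-1,1:] = ([:1,1:] :: bit poly)" by (simp add: bp_minus[of 1, simplified])

lemma bit_final_dvd:
  fixes e :: "bit poly"
  assumes "bez e XX" "e dvd ResF XX" "e dvd ResF (XX^j)" "j mod 65 = 3"
  shows "e dvd (XX+1)^6"
proof -
  have "bez GG e" using G_Res[OF assms(4)] assms(3) by (rule bez_dvd_right)
  then have ce: "bez e GG" by (rule bez_sym)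
  have "e dvd XX^5 * ((XX+1)^6 * GG)" using assms(2) unfolding ResF_def by (simp add: mult_ac)
  then have "e dvd (XX+1)^6 * GG" using bez_pow[OF assms(1)] bez_dvd_mult by blast
  then have "e dvd GG * (XX+1)^6" by (simp add: mult.commute)
  then show ?thesis using ce bez_dvd_mult by blast
qed

lemma bez_h_L:
  fixes h :: "bit poly"
  assumes "\<not> [:-1,1:] dvd h"
  shows "bez h [:1,1:]"
proof -
  have "poly h 1 \<noteq> 0" using assms poly_eq_0_iff_dvd by blast
  then have r: "poly h 1 = 1" by (metis bit_not_zero_iff)
  have "poly (h - [:poly h 1:]) 1 = 0" by simp
  then obtain q where q: "h - [:poly h 1:] = [:-1,1:] * q" using poly_eq_0_iff_dvd by (blast elim: dvdE)
  then have "1 * h + (- q) * [:1,1:] = 1" unfolding X1_eq' r by (simp add: algebra_simps)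
  then show ?thesis by (rule bezI)
qed

lemma dvd_X1_pow:
  fixes e :: "bit poly"
  assumes "e dvd (XX+1)^6" "degree e \<ge> 2"
  shows "(XX+1)^2 dvd e"
proof -
  have enz: "e \<noteq> 0" using assms(2) by auto
  obtain h where h: "e = [:-1,1:] ^ order 1 e * h" "\<not> [:-1,1:] dvd h"
    using order_decomp[OF enz, of 1] by auto
  define m where "m = order 1 e"
  have h': "e = [:1,1:]^m * h" using h(1) unfolding X1_eq' m_def by auto
  have "h dvd [:1,1:]^6" using assms(1) unfolding X1_eq h'(1) by (rule dvd_mult_right)
  moreover have "bez h ([:1,1:]^6)" using bez_h_L[OF h(2)] by (rule bez_pow)
  ultimately have "is_unit h" using bez_unit by blast
  then have "degree h = 0" by (auto simp: is_unit_poly_iff)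
  moreover have "h \<noteq> 0" using enz h'(1) by auto
  ultimately have "degree e = m" unfolding h'(1) by (simp add: degree_mult_eq degree_power_eq)
  then have "m \<ge> 2" using assms(2) by simp
  then have "([:1,1:]::bit poly)^2 dvd [:1,1:]^m" by (rule le_imp_power_dvd)
  then show ?thesis unfolding X1_eq h'(1) by (rule dvd_mult2)
qed

lemma F6: "\<not> (XX+1)^4 dvd Rf XX (XX^(4*t)) (XX^(2*t))"
proof
  assume h: "(XX+1)^4 dvd Rf XX (XX^(4*t)) (XX^(2*t))"
  define W where "W = XX^(4*t)"
  have "Rf XX W (XX^(2*t)) = Fw XX W" using R_Fw[of XX W "XX^(2*t)"] unfolding bp_kill2 .
  moreover have "Fw XX W = Fw XX 1 + (W - 1) * ((W+1)*(XX^15+XX^14+XX^11-XX^10-XX^8) - (XX^15+XX^11+XX^9-XX^6-XX^4-1))"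
    using Fw_diff[of XX W] by (simp add: algebra_simps)
  moreover have "(XX+1)^4 dvd W - 1"
  proof -
    have "XX^4 - 1 = (XX+1)^4" using X4[of XX] unfolding bp_kill2 .
    moreover have "XX^4 - 1 dvd (XX^4)^t - 1^t" by (rule cm_pow) simp
    ultimately show ?thesis unfolding W_def by (simp add: power_mult)
  qed
  ultimately have "(XX+1)^4 dvd Fw XX 1" using h W_def
    by (metis dvd_add_left_iff dvd_mult2)
  moreover have "Fw XX 1 = (XX+1)^4 * (1 + XX^2 + XX^3 + XX^4 + XX^5 + XX^10) + (XX+1)^3"
    using Fw1[of XX] unfolding bp_kill2 .
  ultimately have "(XX+1)^4 dvd (XX+1)^3" by (simp add: dvd_add_right_iff)
  moreover have "(XX+1)^3 \<noteq> 0" by (simp add: X1_eq)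
  ultimately have "degree ((XX+1)^4) \<le> degree ((XX+1)^3)" by (rule dvd_imp_degree_le)
  then show False by (simp add: X1_eq degree_power_eq)
qed

lemma bit_main:
  fixes e Q1 Q2 :: "bit poly"
  assumes "bez e XX" "degree e \<ge> 2" "odd j" "j mod 65 = 3"
    and "e^2 * Q1 = Rf XX (XX^(4*t)) (XX^(2*t))"
    and "e^2 * Q2 = Rf (XX^j) ((XX^j)^(4*t)) ((XX^j)^(2*t))"
  shows False
proof -
  have "e dvd ResF (XX^1)" using assms(1,5) by (intro Res_dvd[of 1 e Q1 t]) auto
  moreover have "e dvd ResF (XX^j)" using assms by (intro Res_dvd[of j e Q2 t]) auto
  ultimately have "e dvd (XX+1)^6" using bit_final_dvd assms by simp
  then have "(XX+1)^2 dvd e" using assms(2) by (rule dvd_X1_pow)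
  then have "((XX+1)^2)^2 dvd e^2" by (rule dvd_power_same)
  then have "(XX+1)^4 dvd e^2" by (simp add: power_mult[symmetric])
  then have "(XX+1)^4 dvd Rf XX (XX^(4*t)) (XX^(2*t))" using assms(5) by (metis dvd_mult2)
  then show False using F6 by blast
qed



lemma mpi_add: "map_poly (of_int :: int \<Rightarrow> 'a::comm_ring_1) (p + q) = map_poly of_int p + map_poly of_int q"
  by (rule poly_eqI) (simp add: coeff_map_poly)

lemma mpi_diff: "map_poly (of_int :: int \<Rightarrow> 'a::comm_ring_1) (p - q) = map_poly of_int p - map_poly of_int q"
  by (rule poly_eqI) (simp add: coeff_map_poly)

lemma mpi_minus: "map_poly (of_int :: int \<Rightarrow> 'a::comm_ring_1) (- p) = - map_poly of_int p"
  by (rule poly_eqI) (simp add: coeff_map_poly)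

lemma mpi_mult: "map_poly (of_int :: int \<Rightarrow> 'a::comm_ring_1) (p * q) = map_poly of_int p * map_poly of_int q"
  by (rule poly_eqI) (simp add: coeff_map_poly coeff_mult of_int_sum)

lemma mpi_one: "map_poly (of_int :: int \<Rightarrow> 'a::comm_ring_1) 1 = 1"
  by simp

lemma mpi_power: "map_poly (of_int :: int \<Rightarrow> 'a::comm_ring_1) (p ^ n) = map_poly of_int p ^ n"
  by (induction n) (simp_all add: mpi_mult)

lemma mpi_X: "map_poly (of_int :: int \<Rightarrow> 'a::comm_ring_1) [:0,1:] = [:0,1:]"
  by (simp add: map_poly_pCons)

lemma mpi_numeral: "map_poly (of_int :: int \<Rightarrow> 'a::comm_ring_1) (numeral n) = numeral n"
  by (simp add: numeral_poly map_poly_pCons)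

lemma mpi_prod: "map_poly (of_int :: int \<Rightarrow> 'a::comm_ring_1) (prod f A) = (\<Prod>x\<in>A. map_poly of_int (f x))"
  by (induction A rule: infinite_finite_induct) (simp_all add: mpi_mult)

lemma mpi_Rf: "map_poly (of_int :: int \<Rightarrow> 'a::comm_ring_1) (Rf a w v) = Rf (map_poly of_int a) (map_poly of_int w) (map_poly of_int v)"
  unfolding Rf_def by (simp add: mpi_add mpi_diff mpi_mult mpi_power mpi_numeral)

lemma poly_Rf: "poly (Rf a w v) (z::'a::comm_ring_1) = Rf (poly a z) (poly w z) (poly v z)"
  unfolding Rf_def by simp

lemma poly_R: "poly (R_poly t) z = Rf z (z^(4*t)) (z^(2*t))"
  unfolding R_poly_def Rf_def by (simp add: poly_monom power_add power_mult algebra_simps)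

lemma prod_roots_dvd:
  fixes p :: "complex poly"
  assumes "finite S" "\<forall>z\<in>S. poly p z = 0"
  shows "(\<Prod>z\<in>S. [:-z,1:]) dvd p"
  using assms
proof (induction S arbitrary: p rule: finite_induct)
  case empty
  then show ?case by simp
next
  case (insert a S)
  from insert.prems have "poly p a = 0" by simp
  then obtain q where q: "p = [:-a,1:] * q" using poly_eq_0_iff_dvd by (blast elim: dvdE)
  have "\<forall>z\<in>S. poly q z = 0"
  proof
    fix z assume "z \<in> S"
    then have "z \<noteq> a" "poly p z = 0" using insert by auto
    then show "poly q z = 0" using q by simp
  qed
  then have "(\<Prod>z\<in>S. [:-z,1:]) dvd q" using insert.IH by blast
  then have "[:-a,1:] * (\<Prod>z\<in>S. [:-z,1:]) dvd [:-a,1:] * q" by (rule mult_dvd_mono[OF dvd_refl])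
  moreover have "(\<Prod>z\<in>insert a S. [:-z,1:]) = [:-a,1:] * (\<Prod>z\<in>S. [:-z,1:])"
    using insert(1,2) by simp
  ultimately show ?case using q by simp
qed


lemma mpi_inj: "map_poly (of_int :: int \<Rightarrow> complex) p = map_poly of_int q \<Longrightarrow> p = q"
proof (rule poly_eqI)
  fix n assume "map_poly (of_int :: int \<Rightarrow> complex) p = map_poly of_int q"
  then have "coeff (map_poly (of_int :: int \<Rightarrow> complex) p) n = coeff (map_poly of_int q) n" by simp
  then show "coeff p n = coeff q n" by (simp add: coeff_map_poly)
qed

lemma mpi_degree: "degree (map_poly (of_int :: int \<Rightarrow> complex) p) = degree p"
  by (rule degree_map_poly) simp

lemma mpi_lead: "lead_coeff (map_poly (of_int :: int \<Rightarrow> complex) p) = of_int (lead_coeff p)"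
  by (simp add: mpi_degree coeff_map_poly)

lemma int_div:
  fixes P F :: "int poly"
  assumes lc: "lead_coeff P = 1"
    and dv: "map_poly (of_int :: int \<Rightarrow> complex) P dvd map_poly of_int F"
  shows "\<exists>Q. F = P * Q"
proof -
  have Pnz: "P \<noteq> 0" using lc by auto
  obtain q r where qr: "pseudo_divmod F P = (q, r)" by (cases "pseudo_divmod F P") auto
  from pseudo_divmod[OF Pnz qr] lc have F: "F = P * q + r" and rdeg: "r = 0 \<or> degree r < degree P"
    by auto
  obtain K where K: "map_poly (of_int :: int \<Rightarrow> complex) F = map_poly of_int P * K" using dv by (elim dvdE)
  have "map_poly (of_int :: int \<Rightarrow> complex) r = map_poly of_int P * (K - map_poly of_int q)"
  proof -
    have "map_poly (of_int :: int \<Rightarrow> complex) r = map_poly of_int (F - P * q)" using F by simp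
    also have "\<dots> = map_poly of_int F - map_poly of_int P * map_poly of_int q" by (simp add: mpi_diff mpi_mult)
    also have "\<dots> = map_poly of_int P * (K - map_poly of_int q)" using K by (simp add: algebra_simps)
    finally show ?thesis .
  qed
  moreover have "r = 0"
  proof (rule ccontr)
    assume rnz: "r \<noteq> 0"
    then have "map_poly (of_int :: int \<Rightarrow> complex) r \<noteq> 0" by (metis mpi_inj map_poly_0)
    with calculation have Knz: "K - map_poly of_int q \<noteq> 0" by auto
    have "map_poly (of_int :: int \<Rightarrow> complex) P \<noteq> 0" using Pnz by (metis mpi_inj map_poly_0)
    then have "degree (map_poly (of_int :: int \<Rightarrow> complex) r) \<ge> degree (map_poly (of_int :: int \<Rightarrow> complex) P)"
      using calculation Knz by (simp add: degree_mult_eq)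
    then have "degree r \<ge> degree P" by (simp add: mpi_degree)
    then show False using rdeg rnz by simp
  qed
  ultimately show ?thesis using F by auto
qed

lemma lin_prod:
  assumes "finite S"
  shows "degree (\<Prod>z\<in>S. [:- z, 1:]) = card S \<and> lead_coeff (\<Prod>z\<in>S. [:- z, 1:]) = (1::complex)"
  using assms
proof (induction S rule: finite_induct)
  case empty
  then show ?case by simp
next
  case (insert a S)
  have nz: "(\<Prod>z\<in>S. [:- z, 1:]) \<noteq> 0" using insert.IH by auto
  define Pr where "Pr = (\<Prod>z\<in>S. [:- z, 1:])"
  have eq: "(\<Prod>z\<in>insert a S. [:- z, 1:]) = [:- a, 1:] * Pr" using insert(1,2) by (simp add: Pr_def del: mult_pCons_left)
  have d: "degree ([:- a, 1:] * Pr) = degree [:- a, 1:] + degree Pr"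
    by (rule degree_mult_eq) (use nz Pr_def in auto)
  have l: "lead_coeff ([:- a, 1:] * Pr) = lead_coeff [:- a, 1:] * lead_coeff Pr" by (rule lead_coeff_mult)
  have "degree (\<Prod>z\<in>insert a S. [:- z, 1:]) = degree [:- a, 1:] + degree Pr" by (simp only: eq d)
  also have "\<dots> = card (insert a S)" using insert Pr_def by simp
  finally have D: "degree (\<Prod>z\<in>insert a S. [:- z, 1:]) = card (insert a S)" .
  have "lead_coeff (\<Prod>z\<in>insert a S. [:- z, 1:]) = lead_coeff [:- a, 1:] * lead_coeff Pr" by (simp only: eq l)
  also have "\<dots> = 1"
  proof -
    have "lead_coeff Pr = 1" using insert.IH Pr_def by blast
    then show ?thesis by simp
  qed
  finally show ?case using D by simp
qed

lemma prim_pow_iff: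
  assumes "z \<in> primitive_roots_of_unity b" "b \<ge> 1"
  shows "z^n = 1 \<longleftrightarrow> b dvd n"
proof
  assume h: "z^n = 1"
  have zb: "z^b = 1" using assms(1) unfolding primitive_roots_of_unity_def by simp
  have "n = b * (n div b) + n mod b" by simp
  then have "z^n = z^(b * (n div b)) * z^(n mod b)" by (metis power_add)
  also have "z^(b * (n div b)) = (z^b)^(n div b)" by (rule power_mult)
  finally have "z^n = (z^b)^(n div b) * z^(n mod b)" .
  then have "z^(n mod b) = 1" using h zb by simp
  moreover have "n mod b < b" using assms(2) by simp
  ultimately have "n mod b = 0" using assms(1) unfolding primitive_roots_of_unity_def by auto
  then show "b dvd n" by auto
next
  assume "b dvd n"
  then obtain k where "n = b * k" by (elim dvdE)
  then show "z^n = 1" using assms(1) unfolding primitive_roots_of_unity_def by (simp add: power_mult)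
qed

lemma prim_fin: "b \<ge> 1 \<Longrightarrow> finite (primitive_roots_of_unity b)"
proof -
  assume "b \<ge> 1"
  then have "finite {z::complex. z^b = 1}" by (intro finite_roots_unity) simp_all
  moreover have "primitive_roots_of_unity b \<subseteq> {z. z^b = 1}" unfolding primitive_roots_of_unity_def by auto
  ultimately show ?thesis by (rule finite_subset[rotated])
qed

lemma prim_pow:
  assumes "z \<in> primitive_roots_of_unity b" "b \<ge> 1" "coprime j b"
  shows "z^j \<in> primitive_roots_of_unity b"
  unfolding primitive_roots_of_unity_def
proof (intro CollectI conjI allI impI)
  show "(z^j)^b = 1" using prim_pow_iff[OF assms(1,2)] by (simp add: power_mult[symmetric])
next
  fix k assume k: "0 < k \<and> k < b"
  show "(z^j)^k \<noteq> 1"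
  proof
    assume "(z^j)^k = 1"
    then have "b dvd j * k" using prim_pow_iff[OF assms(1,2)] by (simp add: power_mult[symmetric])
    then have "b dvd k" using assms(3) by (simp add: coprime_commute coprime_dvd_mult_right_iff)
    then show False using k by (simp add: nat_dvd_not_less)
  qed
qed

lemma prim_neg:
  assumes "z \<in> primitive_roots_of_unity b" "b \<ge> 1" "4 dvd b"
  shows "- z \<in> primitive_roots_of_unity b"
  unfolding primitive_roots_of_unity_def
proof (intro CollectI conjI allI impI)
  obtain c where c: "b = 4*c" using assms(3) by (elim dvdE)
  then have ev: "even b" by simp
  show "(- z)^b = 1" using ev assms(1) unfolding primitive_roots_of_unity_def by simp
next
  fix k assume k: "0 < k \<and> k < b"
  show "(- z)^k \<noteq> 1"
  proof
    assume h: "(- z)^k = 1"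
    then have "((- z)^k)^2 = 1" by simp
    then have "z^(2*k) = 1" by (simp add: power_mult[symmetric] mult.commute)
    then have "b dvd 2*k" using prim_pow_iff[OF assms(1,2)] by simp
    then obtain m where m: "2*k = b*m" by (elim dvdE)
    have "m = 1"
    proof -
      have "m > 0" using m k by (cases m) auto
      moreover have "b * m < b * 2" using m k by linarith
      then have "m < 2" by simp
      ultimately show ?thesis by simp
    qed
    then have bk: "b = 2*k" using m by simp
    obtain c where c: "b = 4*c" using assms(3) by (elim dvdE)
    then have "k = 2*c" using bk by simp
    then have "even k" by simp
    then have "z^k = 1" using h by simp
    then have "b dvd k" using prim_pow_iff[OF assms(1,2)] by simp
    then show False using k by (simp add: nat_dvd_not_less)
  qed
qed

lemma cis_prim:
  assumes "b \<ge> 1"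
  shows "cis (2 * pi / real b) \<in> primitive_roots_of_unity b"
  unfolding primitive_roots_of_unity_def
proof (intro CollectI conjI allI impI)
  have bij: "bij_betw (\<lambda>k. cis (2 * pi * real k / real b)) {..<b} {z. z ^ b = 1}"
    using assms by (intro bij_betw_roots_unity) simp
  have pw: "cis (2 * pi / real b) ^ k = cis (2 * pi * real k / real b)" for k
    by (simp add: DeMoivre mult_ac)
  have "cis (2 * pi * real b / real b) = cis (2 * pi)" using assms by simp
  also have "cis (2 * pi) = 1" by (simp add: complex_eq_iff)
  finally show "cis (2 * pi / real b) ^ b = 1" by (simp add: pw)
  fix k assume k: "0 < k \<and> k < b"
  show "cis (2 * pi / real b) ^ k \<noteq> 1"
  proof
    assume "cis (2 * pi / real b) ^ k = 1"
    then have "cis (2 * pi * real k / real b) = cis (2 * pi * real 0 / real b)" by (simp add: pw)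
    moreover have "k \<in> {..<b}" "0 \<in> {..<b}" using k by auto
    ultimately have "k = 0" using bij unfolding bij_betw_def inj_on_def by blast
    then show False using k by simp
  qed
qed


lemma roots_prod:
  assumes "n \<ge> 1"
  shows "(\<Prod>z\<in>{z::complex. z^n = 1}. [:-z,1:]) = monom 1 n - 1"
proof -
  define S where "S = {z::complex. z^n = 1}"
  define Pr where "Pr = (\<Prod>z\<in>S. [:-z,1:])"
  have fin: "finite S" unfolding S_def using assms by (intro finite_roots_unity) simp_all
  have cardS: "card S = n" unfolding S_def using assms by (intro card_roots_unity_eq) simp
  have "Pr dvd monom 1 n - 1" unfolding Pr_def
    by (rule prod_roots_dvd[OF fin]) (simp add: S_def poly_monom)
  then obtain q where q: "monom 1 n - 1 = Pr * q" by (elim dvdE)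
  have dP: "degree Pr = n" and lP: "lead_coeff Pr = 1" using lin_prod[OF fin] cardS Pr_def by auto
  have dM: "degree (monom (1::complex) n - 1) = n"
  proof -
    have "degree (monom (1::complex) n + (- 1)) = n"
      by (subst degree_add_eq_left) (use assms in \<open>simp_all add: degree_monom_eq\<close>)
    then show ?thesis by simp
  qed
  have qnz: "q \<noteq> 0" using q dM assms by auto
  have Pnz: "Pr \<noteq> 0" using lP by auto
  have "degree (Pr * q) = n + degree q" using dP Pnz qnz by (simp add: degree_mult_eq)
  then have "degree q = 0" using q dM by simp
  then obtain c where c: "q = [:c:]" by (metis degree_eq_zeroE)
  have "lead_coeff (monom (1::complex) n - 1) = 1"
    using assms dM by (simp add: coeff_monom)
  moreover have "lead_coeff (Pr * q) = c" using lP c by (simp add: lead_coeff_mult)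
  ultimately have "c = 1" using q by simp
  then show ?thesis using q c Pr_def S_def by simp
qed

lemma prim_disj:
  assumes "d \<ge> 1" "d' \<ge> 1" "d \<noteq> d'"
  shows "primitive_roots_of_unity d \<inter> primitive_roots_of_unity d' = {}"
proof (rule ccontr)
  assume "primitive_roots_of_unity d \<inter> primitive_roots_of_unity d' \<noteq> {}"
  then obtain z where z: "z \<in> primitive_roots_of_unity d" "z \<in> primitive_roots_of_unity d'" by blast
  have "d dvd d'" using prim_pow_iff[OF z(1) assms(1)] z(2) unfolding primitive_roots_of_unity_def by simp
  moreover have "d' dvd d" using prim_pow_iff[OF z(2) assms(2)] z(1) unfolding primitive_roots_of_unity_def by simp
  ultimately show False using assms(3) by (simp add: dvd_antisym)
qed

lemma roots_decomp:
  assumes "n \<ge> 1"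
  shows "{z::complex. z^n = 1} = (\<Union>d\<in>{d. d dvd n}. primitive_roots_of_unity d)"
proof
  show "(\<Union>d\<in>{d. d dvd n}. primitive_roots_of_unity d) \<subseteq> {z. z^n = 1}"
  proof
    fix z assume "z \<in> (\<Union>d\<in>{d. d dvd n}. primitive_roots_of_unity d)"
    then obtain d where d: "d dvd n" "z \<in> primitive_roots_of_unity d" by blast
    have "d \<ge> 1" using d(1) assms by (metis dvd_0_left_iff not_less_eq_eq le_zero_eq One_nat_def less_one not_less)
    then show "z \<in> {z. z^n = 1}" using prim_pow_iff[OF d(2)] d(1) by simp
  qed
next
  show "{z. z^n = 1} \<subseteq> (\<Union>d\<in>{d. d dvd n}. primitive_roots_of_unity d)"
  proof
    fix z :: complex assume "z \<in> {z. z^n = 1}"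
    then have zn: "z^n = 1" by simp
    define d where "d = (LEAST k. 0 < k \<and> z^k = 1)"
    have ex: "0 < n \<and> z^n = 1" using assms zn by simp
    have d1: "0 < d \<and> z^d = 1" unfolding d_def by (rule LeastI[of _ n]) (rule ex)
    have dmin: "\<And>k. 0 < k \<Longrightarrow> k < d \<Longrightarrow> z^k \<noteq> 1" unfolding d_def using not_less_Least by blast
    have zp: "z \<in> primitive_roots_of_unity d" unfolding primitive_roots_of_unity_def using d1 dmin by auto
    have "d \<ge> 1" using d1 by simp
    then have "d dvd n" using prim_pow_iff[OF zp] zn by simp
    then show "z \<in> (\<Union>d\<in>{d. d dvd n}. primitive_roots_of_unity d)" using zp by blast
  qed
qed

lemma xn_cyc:
  assumes "n \<ge> 1"
  shows "monom 1 n - 1 = (\<Prod>d\<in>{d. d dvd n}. cyclotomic d)"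
proof -
  have fin: "finite {d. d dvd n}" using assms by (simp add: finite_divisors_nat)
  have pos: "\<And>d. d \<in> {d. d dvd n} \<Longrightarrow> d \<ge> 1" using assms
    by (metis One_nat_def dvd_0_left_iff less_one mem_Collect_eq not_less le_zero_eq)
  have "monom 1 n - 1 = (\<Prod>z\<in>(\<Union>d\<in>{d. d dvd n}. primitive_roots_of_unity d). [:-z,1:])"
    using roots_prod[OF assms] roots_decomp[OF assms] by simp
  also have "\<dots> = (\<Prod>d\<in>{d. d dvd n}. (\<Prod>z\<in>primitive_roots_of_unity d. [:-z,1:]))"
  proof -
    have fins: "\<forall>d\<in>{d. d dvd n}. finite (primitive_roots_of_unity d)" using prim_fin pos by blast
    have disj: "\<forall>i\<in>{d. d dvd n}. \<forall>j\<in>{d. d dvd n}. i \<noteq> j \<longrightarrow>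
        primitive_roots_of_unity i \<inter> primitive_roots_of_unity j = {}" using prim_disj pos by blast
    show ?thesis using prod.UNION_disjoint[OF fin fins disj] .
  qed
  finally show ?thesis unfolding cyclotomic_def .
qed

lemma cyc_int:
  assumes "n \<ge> 1"
  shows "\<exists>P. cyclotomic n = map_poly of_int P \<and> lead_coeff P = 1"
  using assms
proof (induction n rule: less_induct)
  case (less n)
  define D where "D = {d. d dvd n \<and> d < n}"
  have Dpos: "\<And>d. d \<in> D \<Longrightarrow> d \<ge> 1" using less.prems unfolding D_def
    by (metis One_nat_def dvd_0_left_iff less_one mem_Collect_eq not_less le_zero_eq)
  have "\<forall>d\<in>D. \<exists>P. cyclotomic d = map_poly of_int P \<and> lead_coeff P = 1"
    using less.IH Dpos unfolding D_def by blast
  then obtain Pf where Pf: "\<And>d. d \<in> D \<Longrightarrow> cyclotomic d = map_poly of_int (Pf d) \<and> lead_coeff (Pf d) = 1"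
    by metis
  define Pr where "Pr = (\<Prod>d\<in>D. Pf d)"
  have finD: "finite D" unfolding D_def using less.prems by (simp add: finite_divisors_nat)
  have mPr: "map_poly of_int Pr = (\<Prod>d\<in>D. cyclotomic d)" unfolding Pr_def mpi_prod using Pf
    by (intro prod.cong) auto
  have lPr: "lead_coeff Pr = 1" unfolding Pr_def lead_coeff_prod using Pf by simp
  have dsplit: "{d. d dvd n} = insert n D" unfolding D_def using less.prems
    by (auto simp: dvd_imp_le le_neq_implies_less)
  have nD: "n \<notin> D" unfolding D_def by simp
  have eq: "monom 1 n - 1 = cyclotomic n * map_poly of_int Pr"
    using xn_cyc[OF less.prems] unfolding dsplit mPr using finD nD by simp
  define F :: "int poly" where "F = monom 1 n - 1"
  have mF: "map_poly (of_int :: int \<Rightarrow> complex) F = monom 1 n - 1"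
    unfolding F_def by (simp add: mpi_diff map_poly_monom)
  have "map_poly (of_int :: int \<Rightarrow> complex) Pr dvd map_poly of_int F" unfolding mF eq by simp
  then obtain Q where Q: "F = Pr * Q" using int_div[OF lPr] by blast
  have "map_poly (of_int :: int \<Rightarrow> complex) Pr * map_poly of_int Q = map_poly of_int Pr * cyclotomic n"
    using mF eq Q by (simp add: mpi_mult mult.commute)
  moreover have "map_poly (of_int :: int \<Rightarrow> complex) Pr \<noteq> 0" using lPr by (metis mpi_lead one_neq_zero leading_coeff_0_iff of_int_1 of_int_0)
  ultimately have cQ: "cyclotomic n = map_poly of_int Q" by simp
  have "lead_coeff (\<Prod>z\<in>primitive_roots_of_unity n. [:- z, 1:]) = 1"
    using lin_prod[OF prim_fin[OF less.prems]] by blast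
  then have "lead_coeff (cyclotomic n) = 1" unfolding cyclotomic_def .
  then have "of_int (lead_coeff Q) = (1::complex)" using cQ mpi_lead by metis
  then have "lead_coeff Q = 1" by simp
  then show ?case using cQ by blast
qed



lemma coeff_pcomp_lin: "coeff (pcompose p [:0,c:]) n = (c::'a::comm_ring_1)^n * coeff p n"
  by (induction p arbitrary: n rule: pCons_induct) (simp_all add: pcompose_pCons coeff_pCons mult_ac split: nat.split)

lemma prim_nz: "z \<in> primitive_roots_of_unity b \<Longrightarrow> b \<ge> 1 \<Longrightarrow> z \<noteq> 0"
  unfolding primitive_roots_of_unity_def by (cases b) auto

lemma cyc_even:
  assumes "b \<ge> 1" "4 dvd b" "odd n"
  shows "coeff (cyclotomic b) n = 0"
proof -
  define Z where "Z = primitive_roots_of_unity b"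
  have fin: "finite Z" unfolding Z_def using assms(1) by (rule prim_fin)
  have bij: "bij_betw uminus Z Z"
    unfolding bij_betw_def inj_on_def
  proof (intro conjI ballI impI)
    show "uminus ` Z = Z"
    proof
      show "uminus ` Z \<subseteq> Z" unfolding Z_def using prim_neg assms by blast
      show "Z \<subseteq> uminus ` Z"
      proof
        fix z assume "z \<in> Z"
        then have "- z \<in> Z" unfolding Z_def using prim_neg assms by blast
        then show "z \<in> uminus ` Z" by (metis image_eqI minus_minus)
      qed
    qed
  qed simp
  have pe: "poly (cyclotomic b) (- x) = (-1)^(card Z) * poly (cyclotomic b) x" for x
  proof -
    have "poly (cyclotomic b) (- x) = (\<Prod>z\<in>Z. (-1) * (x - (- z)))"
      unfolding cyclotomic_def Z_def[symmetric] poly_prod by (intro prod.cong) auto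
    also have "\<dots> = (\<Prod>z\<in>Z. (-1::complex)) * (\<Prod>z\<in>Z. (x - (- z)))" by (rule prod.distrib)
    also have "(\<Prod>z\<in>Z. (-1::complex)) = (-1)^(card Z)" by simp
    also have "(\<Prod>z\<in>Z. (x - (- z))) = (\<Prod>z\<in>Z. (x - z))"
      using prod.reindex_bij_betw[OF bij, of "\<lambda>z. x - z"] by simp
    also have "\<dots> = poly (cyclotomic b) x" unfolding cyclotomic_def Z_def[symmetric] poly_prod by simp
    finally show ?thesis .
  qed
  have "poly (pcompose (cyclotomic b) [:0,-1:]) = poly (smult ((-1)^(card Z)) (cyclotomic b))"
    by (rule ext) (simp add: poly_pcompose pe)
  then have peq: "pcompose (cyclotomic b) [:0,-1:] = smult ((-1)^(card Z)) (cyclotomic b)"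
    by (simp add: poly_eq_poly_eq_iff)
  have c: "(-1)^k * coeff (cyclotomic b) k = (-1)^(card Z) * coeff (cyclotomic b) k" for k
    using arg_cong[OF peq, of "\<lambda>p. coeff p k"] by (simp add: coeff_pcomp_lin)
  have "coeff (cyclotomic b) 0 = poly (cyclotomic b) 0" by (simp add: poly_0_coeff_0)
  also have "\<dots> = (\<Prod>z\<in>Z. - z)" unfolding cyclotomic_def Z_def[symmetric] poly_prod by simp
  also have "\<dots> \<noteq> 0" using fin prim_nz assms(1) unfolding Z_def by simp
  finally have c0: "coeff (cyclotomic b) 0 \<noteq> 0" .
  have "(-1::complex)^(card Z) = 1" using c[of 0] c0 by simp
  then show ?thesis using c[of n] assms(3) by simp
qed

lemma cyc_const:
  assumes "b \<ge> 1"
  shows "norm (coeff (cyclotomic b) 0) = 1"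
proof -
  define Z where "Z = primitive_roots_of_unity b"
  have fin: "finite Z" unfolding Z_def using assms(1) by (rule prim_fin)
  have "coeff (cyclotomic b) 0 = poly (cyclotomic b) 0" by (simp add: poly_0_coeff_0)
  also have "\<dots> = (\<Prod>z\<in>Z. - z)" unfolding cyclotomic_def Z_def[symmetric] poly_prod by simp
  finally have "norm (coeff (cyclotomic b) 0) = norm (\<Prod>z\<in>Z. - z)" by simp
  also have "\<dots> = (\<Prod>z\<in>Z. norm (- z))" by (rule prod_norm[symmetric])
  also have "\<dots> = (\<Prod>z\<in>Z. norm z)" by simp
  finally have "norm (coeff (cyclotomic b) 0) = (\<Prod>z\<in>Z. norm z)" .
  also have "\<dots> = 1"
  proof (rule prod.neutral, rule ballI)
    fix z assume "z \<in> Z"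
    then have "z^b = 1" unfolding Z_def primitive_roots_of_unity_def by simp
    then have "norm z ^ b = 1" by (metis norm_one norm_power)
    then have "norm z ^ b = 1 ^ b" by simp
    moreover have "0 < b" using assms by simp
    ultimately show "norm z = 1" using power_eq_imp_eq_base[of "norm z" b 1] by simp
  qed
  finally show ?thesis .
qed

lemma bit_of_nat_even: "even m \<Longrightarrow> (of_nat m :: bit) = 0"
  by (elim evenE) simp

lemma pderiv_sq_form: "pderiv ((a::bit poly)^2 + XX * b^2) = b^2"
proof -
  have "pderiv (a^2) = 2 * (a * pderiv a)" by (simp add: power2_eq_square pderiv_mult algebra_simps mult_2)
  moreover have "pderiv (b^2) = 2 * (b * pderiv b)" by (simp add: power2_eq_square pderiv_mult algebra_simps mult_2)
  moreover have "pderiv XX = 1" by (simp add: XX_def pderiv_pCons)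
  ultimately show ?thesis by (simp add: pderiv_add pderiv_mult bp_two)
qed

lemma bit_square:
  fixes P :: "int poly"
  assumes "\<And>n. odd n \<Longrightarrow> coeff P n = 0"
  shows "\<exists>e. map_poly of_int P = (e::bit poly)^2"
proof -
  obtain a b where ab: "map_poly of_int P = a^2 + XX * b^2" using decomp by blast
  have "pderiv (map_poly (of_int :: int \<Rightarrow> bit) P) = 0"
  proof (rule poly_eqI)
    fix n
    show "coeff (pderiv (map_poly (of_int :: int \<Rightarrow> bit) P)) n = coeff 0 n"
    proof (cases "even (Suc n)")
      case True
      have "(of_nat (Suc n) :: bit) = 0" using bit_of_nat_even[OF True] .
      then show ?thesis by (simp only: coeff_pderiv) simp
    next
      case False
      then have "coeff P (Suc n) = 0" by (intro assms) simp
      then show ?thesis by (simp add: coeff_pderiv coeff_map_poly)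
    qed
  qed
  then have "b^2 = 0" using ab pderiv_sq_form by metis
  then have "b = 0" by simp
  then show ?thesis using ab by auto
qed



lemma pow_inj:
  assumes "z \<in> primitive_roots_of_unity b" "b \<ge> 1" "i < b" "j < b" "z^i = z^j"
  shows "i = j"
proof (rule ccontr)
  assume ne: "i \<noteq> j"
  have nz: "z \<noteq> 0" using prim_nz assms(1,2) by blast
  have gen: "\<And>i j. i < j \<Longrightarrow> j < b \<Longrightarrow> z^i = z^j \<Longrightarrow> False"
  proof -
    fix i j :: nat assume ij: "i < j" "j < b" "z^i = z^j"
    have "z^j = z^i * z^(j - i)" using ij(1) by (simp add: power_add[symmetric])
    then have "z^(j - i) = 1" using ij(3) nz by simp
    then have "b dvd (j - i)" using prim_pow_iff[OF assms(1,2)] by simp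
    moreover have "0 < j - i" "j - i < b" using ij by auto
    ultimately show False by (simp add: nat_dvd_not_less)
  qed
  show False
  proof (cases "i < j")
    case True then show ?thesis using gen assms by blast
  next
    case False then have "j < i" using ne by simp
    then show ?thesis using gen assms by metis
  qed
qed

lemma card4:
  assumes "b \<ge> 8" "4 dvd b"
  shows "card (primitive_roots_of_unity b) \<ge> 4"
proof -
  define Z where "Z = primitive_roots_of_unity b"
  define z0 where "z0 = cis (2 * pi / real b)"
  have b1: "b \<ge> 1" using assms by simp
  have z0Z: "z0 \<in> Z" unfolding z0_def Z_def using b1 by (rule cis_prim)
  obtain c where c: "b = 4*c" using assms(2) by (elim dvdE)
  define h where "h = 2*c"
  have bh: "b = 2*h" unfolding h_def using c by simp
  have h4: "h \<ge> 4" using assms(1) bh by simp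
  have "(z0^h)^2 = 1" using prim_pow_iff[OF z0Z[unfolded Z_def] b1, of b] bh
    by (simp add: power_mult[symmetric] mult.commute)
  then have "z0^h = 1 \<or> z0^h = -1" by (simp add: power2_eq_1_iff)
  moreover have "z0^h \<noteq> 1" using z0Z h4 bh unfolding Z_def primitive_roots_of_unity_def by auto
  ultimately have zh: "z0^h = -1" by simp
  have cop: "coprime (b - 1) b" using b1 by (intro coprime_diff_one_left_nat) simp
  have w: "z0^(b-1) \<in> Z" using prim_pow[OF z0Z[unfolded Z_def] b1 cop] unfolding Z_def .
  define K where "K = {1, h - 1, h + 1, b - 1}"
  have sub: "(\<lambda>k. z0^k) ` K \<subseteq> Z"
  proof -
    have "z0^1 \<in> Z" using z0Z by simp
    moreover have "z0^(h+1) \<in> Z"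
    proof -
      have "z0^(h+1) = - z0" using zh by simp
      then show ?thesis using prim_neg[OF z0Z[unfolded Z_def] b1 assms(2)] unfolding Z_def by simp
    qed
    moreover have "z0^(h-1) \<in> Z"
    proof -
      have "b - 1 = (h - 1) + h" using bh h4 by simp
      then have "z0^(b-1) = z0^(h-1) * z0^h" by (simp only: power_add)
      then have "z0^(h-1) = - (z0^(b-1))" using zh by simp
      then show ?thesis using prim_neg[OF w[unfolded Z_def] b1 assms(2)] unfolding Z_def by simp
    qed
    ultimately show ?thesis using w unfolding K_def by auto
  qed
  have inj: "inj_on (\<lambda>k. z0^k) K"
  proof (rule inj_onI)
    fix i j assume "i \<in> K" "j \<in> K" "z0^i = z0^j"
    moreover have "\<And>k. k \<in> K \<Longrightarrow> k < b" unfolding K_def using bh h4 by auto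
    ultimately show "i = j" using pow_inj[OF z0Z[unfolded Z_def] b1] by blast
  qed
  have "1 \<notin> {h - 1, h + 1, b - 1}" "h - 1 \<notin> {h + 1, b - 1}" "h + 1 \<notin> {b - 1}"
    using h4 bh by auto
  then have "card K = 4" unfolding K_def by simp
  moreover have "card ((\<lambda>k. z0^k) ` K) = card K" using inj by (rule card_image)
  moreover have "card ((\<lambda>k. z0^k) ` K) \<le> card Z" using sub prim_fin[OF b1] unfolding Z_def by (intro card_mono)
  ultimately show ?thesis unfolding Z_def by simp
qed

lemma root_R:
  assumes "b \<ge> 1" "cyclotomic b dvd R_poly t" "z \<in> primitive_roots_of_unity b"
  shows "poly (R_poly t) z = 0"
proof -
  have "poly (cyclotomic b) z = 0"
    unfolding cyclotomic_def poly_prod using prim_fin[OF assms(1)] assms(3) by (simp add: prod_zero_iff)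
  then show ?thesis using assms(2) by (auto elim!: dvdE)
qed

lemma conj_div:
  assumes "b \<ge> 1" "cyclotomic b = map_poly of_int P" "lead_coeff P = 1"
    "cyclotomic b dvd R_poly t" "coprime j b"
  shows "\<exists>Q. Rf (XX^j) ((XX^j)^(4*t)) ((XX^j)^(2*t)) = map_poly of_int P * (Q :: bit poly)"
proof -
  define Xi :: "int poly" where "Xi = [:0,1:]"
  define F where "F = Rf (Xi^j) ((Xi^j)^(4*t)) ((Xi^j)^(2*t))"
  have mF: "map_poly (of_int :: int \<Rightarrow> complex) F = Rf ([:0,1:]^j) (([:0,1:]^j)^(4*t)) (([:0,1:]^j)^(2*t))"
    unfolding F_def Xi_def by (simp add: mpi_Rf mpi_power mpi_X)
  have "\<forall>z\<in>primitive_roots_of_unity b. poly (map_poly (of_int :: int \<Rightarrow> complex) F) z = 0"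
  proof
    fix z assume z: "z \<in> primitive_roots_of_unity b"
    have "poly (map_poly (of_int :: int \<Rightarrow> complex) F) z = Rf (z^j) ((z^j)^(4*t)) ((z^j)^(2*t))"
      unfolding mF poly_Rf by simp
    also have "\<dots> = poly (R_poly t) (z^j)" by (simp add: poly_R)
    also have "\<dots> = 0" using root_R[OF assms(1,4) prim_pow[OF z assms(1,5)]] .
    finally show "poly (map_poly (of_int :: int \<Rightarrow> complex) F) z = 0" .
  qed
  then have "cyclotomic b dvd map_poly of_int F" unfolding cyclotomic_def
    by (intro prod_roots_dvd prim_fin assms(1))
  then have "map_poly of_int P dvd map_poly (of_int :: int \<Rightarrow> complex) F" using assms(2) by simp
  then obtain Q where Q: "F = P * Q" using int_div[OF assms(3)] by blast
  have "map_poly (of_int :: int \<Rightarrow> bit) F = Rf (XX^j) ((XX^j)^(4*t)) ((XX^j)^(2*t))"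
    unfolding F_def Xi_def XX_def by (simp add: mpi_Rf mpi_power mpi_X)
  moreover have "map_poly (of_int :: int \<Rightarrow> bit) F = map_poly of_int P * map_poly of_int Q"
    unfolding Q by (rule mpi_mult)
  ultimately show ?thesis by metis
qed

lemma j0_exists:
  fixes b :: nat
  assumes "b \<ge> 1"
  shows "\<exists>j::nat. coprime j b \<and> j mod 65 = 3"
proof -
  define S where "S = prime_factors b - {3,5,13}"
  define s where "s = \<Prod>S"
  define j where "j = 3 + 65 * s"
  have finS: "finite S" unfolding S_def by simp
  have Sprime: "\<And>q. q \<in> S \<Longrightarrow> prime q" unfolding S_def by auto
  have cop: "coprime j b"
  proof (rule ccontr)
    assume "\<not> coprime j b"
    then have "gcd j b \<noteq> 1" by (simp add: coprime_iff_gcd_eq_1)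
    then obtain p where p: "prime p" "p dvd gcd j b" using prime_factor_nat by blast
    then have pj: "p dvd j" and pb: "p dvd b" by auto
    have p3: "p dvd 65 * s \<Longrightarrow> p dvd 3" using pj unfolding j_def by (simp add: dvd_add_left_iff)
    have notS3: "\<not> 3 dvd s"
    proof
      assume "3 dvd s"
      then obtain q where q: "q \<in> S" "3 dvd q" unfolding s_def using prime_dvd_prod_iff[OF finS, of 3 id] by auto
      then have "q = 3" using Sprime[OF q(1)] by (metis prime_nat_iff numeral_eq_one_iff semiring_norm(86))
      then show False using q(1) unfolding S_def by simp
    qed
    show False
    proof (cases "p \<in> S")
      case True
      then have "p dvd s" unfolding s_def using dvd_prodI[OF finS True, of "\<lambda>x. x"] by simp
      then have "p dvd 3" using p3 by simp
      then have "p \<le> 3" by (simp add: dvd_imp_le)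
      moreover have "p \<ge> 2" using p(1) by (rule prime_ge_2_nat)
      moreover have "p \<noteq> 2" using \<open>p dvd 3\<close> by auto
      ultimately have "p = 3" by simp
      then show False using True unfolding S_def by simp
    next
      case False
      have "p \<in> prime_factors b" using p(1) pb assms by (auto simp: in_prime_factors_iff)
      then have "p = 3 \<or> p = 5 \<or> p = 13" using False unfolding S_def by auto
      then show False
      proof (elim disjE)
        assume "p = 3"
        then have "3 dvd 65 * s" using pj unfolding j_def by (simp add: dvd_add_right_iff)
        then have "3 dvd s" using prime_dvd_mult_iff[of 3 65 s] by simp
        then show False using notS3 by simp
      next
        assume "p = 5"
        then have "p dvd 65 * s" by simp
        then have "p dvd 3" by (rule p3)
        then show False using \<open>p = 5\<close> by simp
      next
        assume "p = 13"
        then have "p dvd 65 * s" by simp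
        then have "p dvd 3" by (rule p3)
        then show False using \<open>p = 13\<close> by simp
      qed
    qed
  qed
  moreover have "j mod 65 = 3" unfolding j_def by simp
  ultimately show ?thesis by blast
qed

lemma Rf_i: "Rf \<i> 1 v = 2 * v * (1 + \<i>)"
proof -
  have i4: "\<i>^4 = 1" by (simp add: power_mult[of \<i> 2 2, simplified])
  have i3: "\<i>^3 = - \<i>" by (simp add: power3_eq_cube)
  have i5: "\<i>^5 = \<i>" using power_add[of \<i> 4 1] i4 by simp
  have i7: "\<i>^7 = - \<i>" using power_add[of \<i> 4 3] i4 i3 by simp
  have i8: "\<i>^8 = 1" using power_add[of \<i> 4 4] i4 by simp
  have i9: "\<i>^9 = \<i>" using power_add[of \<i> 8 1] i8 by simp
  show ?thesis unfolding Rf_def by (simp add: i5 i7 i9 algebra_simps)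
qed



theorem mainTheorem6:
  fixes t b :: nat
  assumes "b \<ge> 1"
    and "cyclotomic b dvd R_poly t"
  shows "\<not> (4 dvd b)"
proof
  assume b4: "4 dvd b"
  obtain c where c: "b = 4 * c" using b4 by (elim dvdE)
  have "c \<ge> 1" using assms(1) c by (cases c) auto
  then have "b = 4 \<or> b \<ge> 8" using c by (cases "c = 1") auto
  then consider "b = 4" | "b \<ge> 8" by blast
  then show False
  proof cases
    case 1
    have iZ: "\<i> \<in> primitive_roots_of_unity b"
      unfolding primitive_roots_of_unity_def 1
    proof (intro CollectI conjI allI impI)
      show "\<i>^4 = 1" by (simp add: power_mult[of \<i> 2 2, simplified])
      fix k :: nat assume "0 < k \<and> k < 4"
      then have "k = 1 \<or> k = 2 \<or> k = 3" by auto
      then show "\<i>^k \<noteq> 1" by (auto simp: power3_eq_cube complex_eq_iff)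
    qed
    have "poly (R_poly t) \<i> = 0" using root_R[OF assms(1,2) iZ] .
    then have f: "Rf \<i> (\<i>^(4*t)) (\<i>^(2*t)) = 0" by (simp add: poly_R)
    have e1: "\<i>^(4*t) = 1" by (simp add: power_mult power_mult[of \<i> 2 2, simplified])
    have e2: "\<i>^(2*t) = (-1)^t" by (simp add: power_mult)
    have "Rf \<i> 1 ((-1)^t) = 0" using f unfolding e1 e2 .
    then have "2 * (-1)^t * (1 + \<i>) = 0" unfolding Rf_i .
    moreover have "(1 + \<i>) \<noteq> 0" by (simp add: complex_eq_iff)
    ultimately show False by simp
  next
    case 2
    obtain P where P: "cyclotomic b = map_poly of_int P" "lead_coeff P = 1"
      using cyc_int[OF assms(1)] by blast
    have odd0: "coeff P n = 0" if "odd n" for n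
    proof -
      have "coeff (cyclotomic b) n = 0" using cyc_even[OF assms(1) b4 that] .
      then show ?thesis unfolding P(1) by (simp add: coeff_map_poly)
    qed
    obtain e where e: "map_poly of_int P = (e :: bit poly)^2" using bit_square[OF odd0] by blast
    have "norm (coeff (cyclotomic b) 0) = 1" using cyc_const[OF assms(1)] .
    then have "\<bar>coeff P 0\<bar> = 1" unfolding P(1) by (simp add: coeff_map_poly)
    then have "coeff P 0 = 1 \<or> coeff P 0 = -1" by auto
    then have "(of_int (coeff P 0) :: bit) = 1" by auto
    moreover have "coeff (map_poly of_int P) 0 = (of_int (coeff P 0) :: bit)" by (simp add: coeff_map_poly)
    ultimately have "coeff (e^2) 0 = 1" using e by simp
    then have "coeff e 0 * coeff e 0 = 1" by (simp add: power2_eq_square coeff_mult_0)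
    then have e0: "coeff e 0 = 1" by (simp add: bit_sq)
    obtain a e' where ae: "e = pCons a e'" by (cases e) auto
    then have "a = 1" using e0 by simp
    have "e = [:a:] + XX * e'" using ae pCons_as[of a e'] by (rule trans)
    then have "e = [:1:] + XX * e'" using \<open>a = 1\<close> by simp
    then have "1 * e + (- e') * XX = 1" by (simp add: algebra_simps)
    then have bz: "bez e XX" by (rule bezI)
    have "degree (map_poly (of_int :: int \<Rightarrow> bit) P) = degree P"
      using P(2) by (intro map_poly_degree_eq) simp
    moreover have "degree P = degree (cyclotomic b)" unfolding P(1) by (simp add: mpi_degree)
    moreover have "degree (cyclotomic b) = card (primitive_roots_of_unity b)"
      unfolding cyclotomic_def using lin_prod[OF prim_fin[OF assms(1)]] by blast
    moreover have "card (primitive_roots_of_unity b) \<ge> 4" using card4[OF 2 b4] .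
    ultimately have "degree (e^2) \<ge> 4" using e by simp
    then have dege: "degree e \<ge> 2" by (simp add: deg_sq)
    obtain j0 where j0: "coprime j0 b" "j0 mod 65 = 3" using j0_exists[OF assms(1)] by blast
    have "odd j0"
    proof
      assume "even j0"
      moreover have "even b" using c by simp
      ultimately have "is_unit (2::nat)" using coprime_common_divisor[OF j0(1), of 2] by simp
      then show False by simp
    qed
    obtain Q1 where Q1: "Rf (XX^1) ((XX^1)^(4*t)) ((XX^1)^(2*t)) = map_poly of_int P * Q1"
      using conj_div[OF assms(1) P assms(2), of 1] by auto
    obtain Q2 where Q2: "Rf (XX^j0) ((XX^j0)^(4*t)) ((XX^j0)^(2*t)) = map_poly of_int P * Q2"
      using conj_div[OF assms(1) P assms(2) j0(1)] by blast
    show False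
      using bit_main[OF bz dege \<open>odd j0\<close> j0(2), of Q1 t Q2] Q1 Q2 e by simp
  qed
qed


end
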